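(* Fix $\eta>0$. Let $\mu^*\in\arg\min_{\mu\in\mathbb{L}_2}\langle C,\mu\rangle$, let $\lambda\in\mathbb{R}^{2md}$, let $\hat\mu=\mathrm{Proj}(\mu^\lambda)\in\mathbb{L}_2$, and let $\delta=\max_{e\in E,i\in e}\|\nu^\lambda_{e,i}\|_1$. Then $$\langle C,\hat\mu-\mu^*\rangle\le16(m+n)d\|C\|_\infty\delta+4\|C\|_\infty\sum_{e\in E,i\in e}\|\nu^\lambda_{e,i}\|_1+\frac{n\log d+2m\log d}{\eta}.$$
   Context: Let $G=(V,E)$ be a finite undirected graph with $n=|V|$, $m=|E|$, every vertex incident to at least one edge; $N_i=\{e\in E:i\in e\}$. $\chi$ is a finite label set with $d=|\chi|\ge2$. Costs $C_i\in\mathbb{R}^\chi$, $C_e\in\mathbb{R}^{\chi^2}$; $\|C\|_\infty$ is the largest absolute entry; for $e=\{i,j\}$ (with fixed orientation), $x_e=(x_i,x_j)$, $(x_e)_i=x_i$. $\langle C,\mu\rangle=\sum_i\sum_xC_i(x)\mu_i(x)+\sum_e\sum_{x_e}C_e(x_e)\mu_e(x_e)$. $\mathbb{L}_2=\{\mu\ge0:\mu_i\in\Sigma^d\ \forall i,\ \sum_{x_e:(x_e)_i=x}\mu_e(x_e)=\mu_i(x)\ \forall e,\,i\in e,\,x\}$, $\Sigma^d$ the probability simplex on $\chi$. For $\lambda\in\mathbb{R}^{2md}$ (indexed by $(e,i,x)$): $\mu^\lambda_i(x)\propto\exp(-\eta C_i(x)+\eta\sum_{e\in N_i}\lambda_{e,i}(x))$,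 $\mu^\lambda_e(x_e)\propto\exp(-\eta C_e(x_e)-\eta\sum_{i\in e}\lambda_{e,i}((x_e)_i))$, each normalized; $S^\lambda_{e,i}(x)=\sum_{x_e:(x_e)_i=x}\mu^\lambda_e(x_e)$; slack $\nu^\lambda_{e,i}=S^\lambda_{e,i}-\mu^\lambda_i$. Rounding map: for $F\in\mathbb{R}_{>0}^{\chi\times\chi}$ and $r,c\in\Sigma^d$, with $r(F),c(F)$ the row/column sums, let $F'=\mathrm{diag}(a)F$ with $a(x)=\min\{r(x)/r(F)(x),1\}$, $F''=F'\mathrm{diag}(b)$ with $b(x)=\min\{c(x)/c(F')(x),1\}$, $\mathrm{err}_r=r-r(F'')$, $\mathrm{err}_c=c-c(F'')$, output $F''+\mathrm{err}_r\mathrm{err}_c^\top/\|\mathrm{err}_c\|_1$ (or $F''$ if $\mathrm{err}_c=0$). $\mathrm{Proj}(\mu^\lambda)$: $\hat\mu_i=\mu^\lambda_i$, and for $e=\{i,j\}$, $\hat\mu_e$ is the rounding of $\mu^\lambda_e$ (rows indexed by $x_i$, columns by $x_j$) with $r=\mu^\lambda_i$, $c=\mu^\lambda_j$. *)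

theory Defs
  imports Complex_Main
begin

(* Graph: vertex set V, edge set E of ordered pairs (fixed orientation of each
   undirected edge {i,j}); simple, loop-free, each undirected edge stored once,
   every vertex incident to some edge. *)
definition graph_ok :: "'v set \<Rightarrow> ('v \<times> 'v) set \<Rightarrow> bool" where
  "graph_ok V E \<longleftrightarrow> finite V \<and> E \<subseteq> V \<times> V \<and>
     (\<forall>(i,j)\<in>E. i \<noteq> j \<and> (j,i) \<notin> E) \<and>
     (\<forall>i\<in>V. \<exists>e\<in>E. fst e = i \<or> snd e = i)"

definition nbr :: "('v \<times> 'v) set \<Rightarrow> 'v \<Rightarrow> ('v \<times> 'v) set" where
  "nbr E i = {e\<in>E. fst e = i \<or> snd e = i}"

definition cost_norm :: "'v set \<Rightarrow> ('v \<times> 'v) set \<Rightarrow> ('v \<Rightarrow> 'x::finite \<Rightarrow> real)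
     \<Rightarrow> ('v \<times> 'v \<Rightarrow> 'x \<Rightarrow> 'x \<Rightarrow> real) \<Rightarrow> real" where
  "cost_norm V E Ci Ce = Max ({\<bar>Ci i x\<bar> | i x. i \<in> V} \<union> {\<bar>Ce e x y\<bar> | e x y. e \<in> E})"

definition cost :: "'v set \<Rightarrow> ('v \<times> 'v) set \<Rightarrow> ('v \<Rightarrow> 'x::finite \<Rightarrow> real)
     \<Rightarrow> ('v \<times> 'v \<Rightarrow> 'x \<Rightarrow> 'x \<Rightarrow> real)
     \<Rightarrow> ('v \<Rightarrow> 'x \<Rightarrow> real) \<Rightarrow> ('v \<times> 'v \<Rightarrow> 'x \<Rightarrow> 'x \<Rightarrow> real) \<Rightarrow> real" where
  "cost V E Ci Ce mv me =
     (\<Sum>i\<in>V. \<Sum>x\<in>UNIV. Ci i x * mv i x) + (\<Sum>e\<in>E. \<Sum>x\<in>UNIV. \<Sum>y\<in>UNIV. Ce e x y * me e x y)"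

definition simplex :: "('x::finite \<Rightarrow> real) \<Rightarrow> bool" where
  "simplex p \<longleftrightarrow> (\<forall>x. p x \<ge> 0) \<and> (\<Sum>x\<in>UNIV. p x) = 1"

(* local polytope L_2; for e = (i,j), rows of mu_e are indexed by x_i, columns by x_j *)
definition L2 :: "'v set \<Rightarrow> ('v \<times> 'v) set
     \<Rightarrow> ('v \<Rightarrow> 'x::finite \<Rightarrow> real) \<Rightarrow> ('v \<times> 'v \<Rightarrow> 'x \<Rightarrow> 'x \<Rightarrow> real) \<Rightarrow> bool" where
  "L2 V E mv me \<longleftrightarrow>
     (\<forall>i\<in>V. simplex (mv i)) \<and>
     (\<forall>e\<in>E. \<forall>x y. me e x y \<ge> 0) \<and>
     (\<forall>e\<in>E. \<forall>x. (\<Sum>y\<in>UNIV. me e x y) = mv (fst e) x) \<and>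
     (\<forall>e\<in>E. \<forall>y. (\<Sum>x\<in>UNIV. me e x y) = mv (snd e) y)"

(* mu^lambda; lam e i x = lambda_{e,i}(x) *)
definition mu_lam_v :: "real \<Rightarrow> ('v \<times> 'v) set \<Rightarrow> ('v \<Rightarrow> 'x::finite \<Rightarrow> real)
     \<Rightarrow> ('v \<times> 'v \<Rightarrow> 'v \<Rightarrow> 'x \<Rightarrow> real) \<Rightarrow> 'v \<Rightarrow> 'x \<Rightarrow> real" where
  "mu_lam_v \<eta> E Ci lam i x =
     exp (- \<eta> * Ci i x + \<eta> * (\<Sum>e\<in>nbr E i. lam e i x)) /
     (\<Sum>z\<in>UNIV. exp (- \<eta> * Ci i z + \<eta> * (\<Sum>e\<in>nbr E i. lam e i z)))"

definition mu_lam_e :: "real \<Rightarrow> ('v \<times> 'v \<Rightarrow> 'x::finite \<Rightarrow> 'x \<Rightarrow> real)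
     \<Rightarrow> ('v \<times> 'v \<Rightarrow> 'v \<Rightarrow> 'x \<Rightarrow> real) \<Rightarrow> 'v \<times> 'v \<Rightarrow> 'x \<Rightarrow> 'x \<Rightarrow> real" where
  "mu_lam_e \<eta> Ce lam e x y =
     exp (- \<eta> * Ce e x y - \<eta> * (lam e (fst e) x + lam e (snd e) y)) /
     (\<Sum>z\<in>UNIV. \<Sum>w\<in>UNIV. exp (- \<eta> * Ce e z w - \<eta> * (lam e (fst e) z + lam e (snd e) w)))"

definition S_lam :: "real \<Rightarrow> ('v \<times> 'v \<Rightarrow> 'x::finite \<Rightarrow> 'x \<Rightarrow> real)
     \<Rightarrow> ('v \<times> 'v \<Rightarrow> 'v \<Rightarrow> 'x \<Rightarrow> real) \<Rightarrow> 'v \<times> 'v \<Rightarrow> 'v \<Rightarrow> 'x \<Rightarrow> real" where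
  "S_lam \<eta> Ce lam e i x =
     (if i = fst e then (\<Sum>y\<in>UNIV. mu_lam_e \<eta> Ce lam e x y)
      else (\<Sum>y\<in>UNIV. mu_lam_e \<eta> Ce lam e y x))"

definition slack_norm :: "real \<Rightarrow> ('v \<times> 'v) set \<Rightarrow> ('v \<Rightarrow> 'x::finite \<Rightarrow> real)
     \<Rightarrow> ('v \<times> 'v \<Rightarrow> 'x \<Rightarrow> 'x \<Rightarrow> real) \<Rightarrow> ('v \<times> 'v \<Rightarrow> 'v \<Rightarrow> 'x \<Rightarrow> real)
     \<Rightarrow> 'v \<times> 'v \<Rightarrow> 'v \<Rightarrow> real" where
  "slack_norm \<eta> E Ci Ce lam e i =
     (\<Sum>x\<in>UNIV. \<bar>S_lam \<eta> Ce lam e i x - mu_lam_v \<eta> E Ci lam i x\<bar>)"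

definition round_map :: "('x::finite \<Rightarrow> 'x \<Rightarrow> real) \<Rightarrow> ('x \<Rightarrow> real) \<Rightarrow> ('x \<Rightarrow> real)
     \<Rightarrow> 'x \<Rightarrow> 'x \<Rightarrow> real" where
  "round_map F r c =
    (let a = (\<lambda>x. min (r x / (\<Sum>y\<in>UNIV. F x y)) 1);
         F1 = (\<lambda>x y. a x * F x y);
         b = (\<lambda>y. min (c y / (\<Sum>x\<in>UNIV. F1 x y)) 1);
         F2 = (\<lambda>x y. F1 x y * b y);
         err_r = (\<lambda>x. r x - (\<Sum>y\<in>UNIV. F2 x y));
         err_c = (\<lambda>y. c y - (\<Sum>x\<in>UNIV. F2 x y))
     in if (\<forall>y. err_c y = 0) then F2
        else (\<lambda>x y. F2 x y + err_r x * err_c y / (\<Sum>z\<in>UNIV. \<bar>err_c z\<bar>)))"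

definition proj_v :: "real \<Rightarrow> ('v \<times> 'v) set \<Rightarrow> ('v \<Rightarrow> 'x::finite \<Rightarrow> real)
     \<Rightarrow> ('v \<times> 'v \<Rightarrow> 'v \<Rightarrow> 'x \<Rightarrow> real) \<Rightarrow> 'v \<Rightarrow> 'x \<Rightarrow> real" where
  "proj_v \<eta> E Ci lam = mu_lam_v \<eta> E Ci lam"

definition proj_e :: "real \<Rightarrow> ('v \<times> 'v) set \<Rightarrow> ('v \<Rightarrow> 'x::finite \<Rightarrow> real)
     \<Rightarrow> ('v \<times> 'v \<Rightarrow> 'x \<Rightarrow> 'x \<Rightarrow> real) \<Rightarrow> ('v \<times> 'v \<Rightarrow> 'v \<Rightarrow> 'x \<Rightarrow> real)
     \<Rightarrow> 'v \<times> 'v \<Rightarrow> 'x \<Rightarrow> 'x \<Rightarrow> real" where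
  "proj_e \<eta> E Ci Ce lam e =
     round_map (mu_lam_e \<eta> Ce lam e) (mu_lam_v \<eta> E Ci lam (fst e)) (mu_lam_v \<eta> E Ci lam (snd e))"

end

theory Submission
  imports Defs
begin


lemma entropy_le:
  assumes fin: "finite A" and pos: "\<forall>x\<in>A. p x > 0" and s1: "sum p A = 1"
  shows "- (\<Sum>x\<in>A. p x * ln (p x)) \<le> ln (real (card A))"
proof -
  have ne: "A \<noteq> {}" using s1 by auto
  define N where "N = real (card A)"
  have N0: "N > 0" using fin ne by (simp add: N_def card_gt_0_iff)
  have each: "- (p x * ln (p x)) \<le> p x * ln N + (1/N - p x)" if x: "x \<in> A" for x
  proof -
    have px: "p x > 0" using pos x by auto
    have "ln (1/(N * p x)) \<le> 1/(N * p x) - 1" using px N0 by (intro ln_le_minus_one) simp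
    moreover have "ln (1/(N * p x)) = - ln N - ln (p x)" using px N0 by (simp add: ln_div ln_mult)
    ultimately have "- ln N - ln (p x) \<le> 1/(N * p x) - 1" by simp
    hence "p x * (- ln N - ln (p x)) \<le> p x * (1/(N * p x) - 1)" using px by (intro mult_left_mono) auto
    moreover have "p x * (1/(N * p x) - 1) = 1/N - p x" using px N0 by (simp add: field_simps)
    ultimately show ?thesis by (simp add: algebra_simps)
  qed
  have "- (\<Sum>x\<in>A. p x * ln (p x)) = (\<Sum>x\<in>A. - (p x * ln (p x)))" by (simp add: sum_negf)
  also have "\<dots> \<le> (\<Sum>x\<in>A. p x * ln N + (1/N - p x))" by (rule sum_mono) (use each in auto)
  also have "\<dots> = ln N * sum p A + card A * (1/N) - sum p A"
    by (simp add: sum.distrib sum_subtractf sum_distrib_left mult.commute)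
  also have "\<dots> = ln N" using s1 N0 by (simp add: N_def)
  finally show ?thesis by (simp add: N_def)
qed

lemma gibbs:
  assumes fin: "finite A" and eta: "\<eta> > 0"
    and Z: "Z = (\<Sum>z\<in>A. exp (- \<eta> * a z))"
    and p: "\<forall>x\<in>A. p x = exp (- \<eta> * a x) / Z"
    and q0: "\<forall>x\<in>A. q x \<ge> 0" and q1: "sum q A = 1"
  shows "(\<Sum>x\<in>A. a x * (p x - q x)) \<le> ln (real (card A)) / \<eta>"
proof -
  have ne: "A \<noteq> {}" using q1 by auto
  have Z0: "Z > 0" unfolding Z using fin ne by (intro sum_pos) auto
  have ppos: "\<forall>x\<in>A. p x > 0" using p Z0 by auto
  have ple: "p x \<le> 1" if "x \<in> A" for x
  proof -
    have "exp (- \<eta> * a x) \<le> Z" unfolding Z using fin that by (intro member_le_sum) auto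
    thus ?thesis using p that Z0 by auto
  qed
  have ps: "sum p A = 1"
  proof -
    have "sum p A = (\<Sum>x\<in>A. exp (- \<eta> * a x) / Z)" using p by (intro sum.cong) auto
    also have "\<dots> = 1" using Z0 unfolding Z by (simp add: sum_divide_distrib[symmetric])
    finally show ?thesis .
  qed
  have lnp: "ln (p x) = - \<eta> * a x - ln Z" if "x \<in> A" for x
    using p that Z0 by (simp add: ln_div)
  have pt: "\<eta> * (a x * (p x - q x)) = - (p x * ln (p x)) + q x * ln (p x) - ln Z * (p x - q x)"
    if "x \<in> A" for x unfolding lnp[OF that] by (simp add: algebra_simps)
  have "\<eta> * (\<Sum>x\<in>A. a x * (p x - q x)) = (\<Sum>x\<in>A. - (p x * ln (p x)) + q x * ln (p x) - ln Z * (p x - q x))"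
    by (simp add: sum_distrib_left pt cong: sum.cong)
  also have "\<dots> = - (\<Sum>x\<in>A. p x * ln (p x)) + (\<Sum>x\<in>A. q x * ln (p x)) - ln Z * (sum p A - sum q A)"
    by (simp add: sum.distrib sum_subtractf sum_negf sum_distrib_left[symmetric])
  also have "\<dots> = - (\<Sum>x\<in>A. p x * ln (p x)) + (\<Sum>x\<in>A. q x * ln (p x))" using ps q1 by simp
  also have "\<dots> \<le> ln (real (card A)) + 0"
  proof (rule add_mono)
    show "- (\<Sum>x\<in>A. p x * ln (p x)) \<le> ln (real (card A))" by (rule entropy_le[OF fin ppos ps])
    show "(\<Sum>x\<in>A. q x * ln (p x)) \<le> 0"
    proof (rule sum_nonpos)
      fix x assume x: "x \<in> A"
      have "ln (p x) \<le> 0" using ple[OF x] ppos x by auto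
      thus "q x * ln (p x) \<le> 0" using q0 x by (simp add: mult_nonneg_nonpos)
    qed
  qed
  finally have "\<eta> * (\<Sum>x\<in>A. a x * (p x - q x)) \<le> ln (real (card A))" by simp
  thus ?thesis using eta by (simp add: field_simps mult.commute)
qed

lemma nbr_swap:
  assumes G: "graph_ok V E"
  shows "(\<Sum>i\<in>V. \<Sum>e\<in>nbr E i. f e i) = (\<Sum>e\<in>E. f e (fst e) + f e (snd e))"
proof -
  have fV: "finite V" and EV: "E \<subseteq> V \<times> V" using G by (auto simp: graph_ok_def)
  have fE: "finite E" using fV EV finite_subset by blast
  have "(\<Sum>i\<in>V. \<Sum>e\<in>nbr E i. f e i) = (\<Sum>i\<in>V. \<Sum>e\<in>{e. e \<in> E \<and> (fst e = i \<or> snd e = i)}. f e i)"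
    by (simp add: nbr_def)
  also have "\<dots> = (\<Sum>e\<in>E. \<Sum>i\<in>{i. i \<in> V \<and> (fst e = i \<or> snd e = i)}. f e i)"
    by (rule sum.swap_restrict[OF fV fE])
  also have "\<dots> = (\<Sum>e\<in>E. f e (fst e) + f e (snd e))"
  proof (rule sum.cong[OF refl])
    fix e assume e: "e \<in> E"
    obtain i j where ij: "e = (i,j)" by fastforce
    have "i \<noteq> j" "i \<in> V" "j \<in> V" using G e ij by (auto simp: graph_ok_def)
    hence "{i'. i' \<in> V \<and> (fst e = i' \<or> snd e = i')} = {i, j}" using ij by auto
    thus "(\<Sum>i\<in>{i. i \<in> V \<and> (fst e = i \<or> snd e = i)}. f e i) = f e (fst e) + f e (snd e)"
      using \<open>i \<noteq> j\<close> ij by simp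
  qed
  finally show ?thesis .
qed



lemma round_bound:
  fixes F :: "'x::finite \<Rightarrow> 'x \<Rightarrow> real"
  assumes F0: "\<forall>x y. F x y \<ge> 0" and r0: "\<forall>x. r x \<ge> 0" and c0: "\<forall>y. c y \<ge> 0"
    and sr: "(\<Sum>x\<in>UNIV. r x) = (\<Sum>x\<in>UNIV. \<Sum>y\<in>UNIV. F x y)"
  shows "(\<Sum>x\<in>UNIV. \<Sum>y\<in>UNIV. \<bar>round_map F r c x y - F x y\<bar>)
     \<le> 2 * ((\<Sum>x\<in>UNIV. \<bar>(\<Sum>y\<in>UNIV. F x y) - r x\<bar>) + (\<Sum>y\<in>UNIV. \<bar>(\<Sum>x\<in>UNIV. F x y) - c y\<bar>))"
proof -
  define RF where "RF = (\<lambda>x. \<Sum>y\<in>UNIV. F x y)"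
  define a where "a = (\<lambda>x. min (r x / RF x) 1)"
  define F1 where "F1 = (\<lambda>x y. a x * F x y)"
  define CF where "CF = (\<lambda>y. \<Sum>x\<in>UNIV. F x y)"
  define CF1 where "CF1 = (\<lambda>y. \<Sum>x\<in>UNIV. F1 x y)"
  define b where "b = (\<lambda>y. min (c y / CF1 y) 1)"
  define F2 where "F2 = (\<lambda>x y. F1 x y * b y)"
  define er where "er = (\<lambda>x. r x - (\<Sum>y\<in>UNIV. F2 x y))"
  define ec where "ec = (\<lambda>y. c y - (\<Sum>x\<in>UNIV. F2 x y))"
  have RM: "round_map F r c = (if (\<forall>y. ec y = 0) then F2
        else (\<lambda>x y. F2 x y + er x * ec y / (\<Sum>z\<in>UNIV. \<bar>ec z\<bar>)))"
    unfolding round_map_def Let_def ec_def er_def F2_def b_def CF1_def F1_def a_def RF_def ..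
  have RF0: "RF x \<ge> 0" for x unfolding RF_def using F0 by (simp add: sum_nonneg)
  have a0: "0 \<le> a x" "a x \<le> 1" for x unfolding a_def using RF0[of x] r0 by auto
  have aRF: "a x * RF x \<le> r x" for x
  proof (cases "RF x = 0")
    case True thus ?thesis using r0 by simp
  next
    case False
    hence "RF x > 0" using RF0[of x] by simp
    moreover have "a x \<le> r x / RF x" unfolding a_def by simp
    ultimately show ?thesis by (simp add: field_simps)
  qed
  have aRF2: "RF x - a x * RF x \<le> \<bar>RF x - r x\<bar>" for x
  proof (cases "RF x = 0")
    case True thus ?thesis by simp
  next
    case False
    hence pos: "RF x > 0" using RF0[of x] by simp
    show ?thesis
    proof (cases "r x \<ge> RF x")
      case True
      hence "a x = 1" unfolding a_def using pos by (simp add: min_def field_simps)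
      thus ?thesis by simp
    next
      case False
      hence "a x = r x / RF x" unfolding a_def using pos by (simp add: min_def field_simps)
      thus ?thesis using pos by simp
    qed
  qed
  have F10: "F1 x y \<ge> 0" for x y unfolding F1_def using a0 F0 by simp
  have F1le: "F1 x y \<le> F x y" for x y unfolding F1_def using a0[of x] F0
    by (simp add: mult_left_le_one_le)
  have CF10: "CF1 y \<ge> 0" for y unfolding CF1_def using F10 by (simp add: sum_nonneg)
  have CF1le: "CF1 y \<le> CF y" for y unfolding CF1_def CF_def using F1le by (simp add: sum_mono)
  have b0: "0 \<le> b y" "b y \<le> 1" for y unfolding b_def using CF10[of y] c0 by auto
  have bCF: "CF1 y * b y \<le> c y" for y
  proof (cases "CF1 y = 0")
    case True thus ?thesis using c0 by simp
  next
    case False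
    hence "CF1 y > 0" using CF10[of y] by simp
    moreover have "b y \<le> c y / CF1 y" unfolding b_def by simp
    ultimately show ?thesis by (simp add: field_simps)
  qed
  have bCF2: "CF1 y - CF1 y * b y \<le> \<bar>CF y - c y\<bar>" for y
  proof (cases "CF1 y = 0")
    case True thus ?thesis by simp
  next
    case False
    hence pos: "CF1 y > 0" using CF10[of y] by simp
    show ?thesis
    proof (cases "c y \<ge> CF1 y")
      case True
      hence "b y = 1" unfolding b_def using pos by (simp add: min_def field_simps)
      thus ?thesis by simp
    next
      case False
      hence "b y = c y / CF1 y" unfolding b_def using pos by (simp add: min_def field_simps)
      thus ?thesis using pos CF1le[of y] by simp
    qed
  qed
  have F20: "F2 x y \<ge> 0" for x y unfolding F2_def using F10 b0 by simp
  have F2le: "F2 x y \<le> F1 x y" for x y unfolding F2_def using F10[of x y] b0[of y]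
    by (simp add: mult_right_le_one_le)
  have rowF1: "(\<Sum>y\<in>UNIV. F1 x y) = a x * RF x" for x
    unfolding F1_def RF_def by (simp add: sum_distrib_left)
  have colF2: "(\<Sum>x\<in>UNIV. F2 x y) = CF1 y * b y" for y
    unfolding F2_def CF1_def by (simp add: sum_distrib_right)
  have er0: "er x \<ge> 0" for x
  proof -
    have "(\<Sum>y\<in>UNIV. F2 x y) \<le> (\<Sum>y\<in>UNIV. F1 x y)" using F2le by (simp add: sum_mono)
    thus ?thesis unfolding er_def using rowF1[of x] aRF[of x] by simp
  qed
  have ec0: "ec y \<ge> 0" for y unfolding ec_def using colF2[of y] bCF[of y] by simp
  have D1: "(\<Sum>x\<in>UNIV. \<Sum>y\<in>UNIV. F x y - F1 x y) = (\<Sum>x\<in>UNIV. RF x - a x * RF x)"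
    by (simp add: sum_subtractf rowF1 RF_def)
  have D2: "(\<Sum>x\<in>UNIV. \<Sum>y\<in>UNIV. F1 x y - F2 x y) = (\<Sum>y\<in>UNIV. CF1 y - CF1 y * b y)"
    by (subst sum.swap) (simp add: sum_subtractf colF2 CF1_def)
  define T where "T = (\<Sum>x\<in>UNIV. \<Sum>y\<in>UNIV. F x y - F2 x y)"
  have T_eq: "T = (\<Sum>x\<in>UNIV. \<Sum>y\<in>UNIV. F x y - F1 x y) + (\<Sum>x\<in>UNIV. \<Sum>y\<in>UNIV. F1 x y - F2 x y)"
    unfolding T_def by (simp add: sum.distrib[symmetric])
  have T_le: "T \<le> (\<Sum>x\<in>UNIV. \<bar>RF x - r x\<bar>) + (\<Sum>y\<in>UNIV. \<bar>CF y - c y\<bar>)"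
    unfolding T_eq D1 D2 by (intro add_mono sum_mono aRF2 bCF2)
  have T0: "T \<ge> 0" unfolding T_def using F2le F1le
    by (intro sum_nonneg) (smt (verit))
  have ser: "(\<Sum>x\<in>UNIV. er x) = T"
    unfolding er_def T_def using sr by (simp add: sum_subtractf)
  have main: "(\<Sum>x\<in>UNIV. \<Sum>y\<in>UNIV. \<bar>round_map F r c x y - F x y\<bar>) \<le> 2 * T"
  proof (cases "\<forall>y. ec y = 0")
    case True
    have "(\<Sum>x\<in>UNIV. \<Sum>y\<in>UNIV. \<bar>round_map F r c x y - F x y\<bar>) = T"
      unfolding RM T_def using True F2le F1le
      by (intro sum.cong refl) (smt (verit))
    thus ?thesis using T0 by simp
  next
    case False
    define S where "S = (\<Sum>z\<in>UNIV. \<bar>ec z\<bar>)"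
    obtain y0 where y0: "ec y0 \<noteq> 0" using False by auto
    have S0: "S > 0"
    proof -
      have "\<bar>ec y0\<bar> \<le> S" unfolding S_def by (rule member_le_sum) auto
      thus ?thesis using y0 by simp
    qed
    have Sec: "(\<Sum>y\<in>UNIV. ec y) = S" unfolding S_def using ec0 by simp
    have "(\<Sum>x\<in>UNIV. \<Sum>y\<in>UNIV. \<bar>round_map F r c x y - F x y\<bar>)
        \<le> (\<Sum>x\<in>UNIV. \<Sum>y\<in>UNIV. (F x y - F2 x y) + er x * ec y / S)"
    proof (intro sum_mono)
      fix x y
      have e: "er x * ec y / S \<ge> 0" using er0 ec0 S0 by simp
      have "round_map F r c x y - F x y = F2 x y - F x y + er x * ec y / S"
        unfolding RM S_def using False by simp
      thus "\<bar>round_map F r c x y - F x y\<bar> \<le> (F x y - F2 x y) + er x * ec y / S"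
        using e F2le[of x y] F1le[of x y] by linarith
    qed
    also have "\<dots> = T + (\<Sum>x\<in>UNIV. er x * (\<Sum>y\<in>UNIV. ec y) / S)"
      unfolding T_def by (simp add: sum.distrib sum_distrib_left sum_divide_distrib)
    also have "\<dots> = T + (\<Sum>x\<in>UNIV. er x)" using Sec S0 by simp
    also have "\<dots> = 2 * T" using ser by simp
    finally show ?thesis .
  qed
  have "2 * T \<le> 2 * ((\<Sum>x\<in>UNIV. \<bar>RF x - r x\<bar>) + (\<Sum>y\<in>UNIV. \<bar>CF y - c y\<bar>))"
    using T_le by simp
  from order_trans[OF main this] show ?thesis unfolding RF_def CF_def .
qed



lemma sum_pair_UNIV:
  "(\<Sum>p\<in>(UNIV::('a::finite \<times> 'b::finite) set). f p) = (\<Sum>x\<in>UNIV. \<Sum>y\<in>UNIV. f (x,y))"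
  by (simp add: sum.cartesian_product flip: UNIV_Times_UNIV)

lemma lagrange:
  fixes V :: "'v set" and E :: "('v \<times> 'v) set"
    and Ci :: "'v \<Rightarrow> 'x::finite \<Rightarrow> real" and Ce :: "'v \<times> 'v \<Rightarrow> 'x \<Rightarrow> 'x \<Rightarrow> real"
    and lam :: "'v \<times> 'v \<Rightarrow> 'v \<Rightarrow> 'x \<Rightarrow> real"
    and mq :: "'v \<Rightarrow> 'x \<Rightarrow> real" and eq :: "'v \<times> 'v \<Rightarrow> 'x \<Rightarrow> 'x \<Rightarrow> real"
  assumes G: "graph_ok V E" and eta: "\<eta> > 0"
   and mq: "\<forall>i\<in>V. simplex (mq i)" and eq0: "\<forall>e\<in>E. \<forall>x y. eq e x y \<ge> 0"
   and eq1: "\<forall>e\<in>E. (\<Sum>x\<in>UNIV. \<Sum>y\<in>UNIV. eq e x y) = 1"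
   and cr: "\<forall>e\<in>E. \<forall>x. (\<Sum>y\<in>UNIV. eq e x y) - mq (fst e) x
              = (\<Sum>y\<in>UNIV. mu_lam_e \<eta> Ce lam e x y) - mu_lam_v \<eta> E Ci lam (fst e) x"
   and cc: "\<forall>e\<in>E. \<forall>y. (\<Sum>x\<in>UNIV. eq e x y) - mq (snd e) y
              = (\<Sum>x\<in>UNIV. mu_lam_e \<eta> Ce lam e x y) - mu_lam_v \<eta> E Ci lam (snd e) y"
  shows "cost V E Ci Ce (mu_lam_v \<eta> E Ci lam) (mu_lam_e \<eta> Ce lam) - cost V E Ci Ce mq eq
     \<le> (real (card V) + 2 * real (card E)) * ln (real (card (UNIV :: 'x set))) / \<eta>"
proof -
  define mv where "mv = mu_lam_v \<eta> E Ci lam"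
  define me where "me = mu_lam_e \<eta> Ce lam"
  define L where "L = (\<lambda>i x. \<Sum>e\<in>nbr E i. lam e i x)"
  define a where "a = (\<lambda>i x. Ci i x - L i x)"
  define b where "b = (\<lambda>e x y. Ce e x y + (lam e (fst e) x + lam e (snd e) y))"
  define d where "d = real (card (UNIV :: 'x set))"
  have GV: "(\<Sum>x\<in>UNIV. a i x * (mv i x - mq i x)) \<le> ln d / \<eta>" if i: "i \<in> V" for i
  proof -
    have ex: "- \<eta> * Ci i x + \<eta> * (\<Sum>e\<in>nbr E i. lam e i x) = - \<eta> * a i x" for x
      by (simp add: a_def L_def algebra_simps)
    have "(\<Sum>x\<in>UNIV. a i x * (mv i x - mq i x)) \<le> ln (real (card (UNIV::'x set))) / \<eta>"
    proof (rule gibbs[where Z = "\<Sum>z\<in>UNIV. exp (- \<eta> * a i z)"])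
      show "\<forall>x\<in>UNIV. mv i x = exp (- \<eta> * a i x) / (\<Sum>z\<in>UNIV. exp (- \<eta> * a i z))"
        unfolding mv_def mu_lam_v_def ex by simp
      show "\<forall>x\<in>UNIV. 0 \<le> mq i x" "sum (mq i) UNIV = 1" using mq i by (auto simp: simplex_def)
    qed (use eta in auto)
    thus ?thesis by (simp add: d_def)
  qed
  have GE: "(\<Sum>x\<in>UNIV. \<Sum>y\<in>UNIV. b e x y * (me e x y - eq e x y)) \<le> 2 * ln d / \<eta>" if e: "e \<in> E" for e
  proof -
    have ex: "- \<eta> * Ce e x y - \<eta> * (lam e (fst e) x + lam e (snd e) y) = - \<eta> * b e x y" for x y
      by (simp add: b_def algebra_simps)
    have "(\<Sum>p\<in>UNIV. (\<lambda>(x,y). b e x y) p * ((\<lambda>(x,y). me e x y) p - (\<lambda>(x,y). eq e x y) p))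
        \<le> ln (real (card (UNIV::('x\<times>'x) set))) / \<eta>"
    proof (rule gibbs[where Z = "\<Sum>p\<in>UNIV. exp (- \<eta> * (\<lambda>(x,y). b e x y) p)"])
      show "\<forall>p\<in>UNIV. (\<lambda>(x,y). me e x y) p = exp (- \<eta> * (\<lambda>(x,y). b e x y) p) / (\<Sum>p\<in>UNIV. exp (- \<eta> * (\<lambda>(x,y). b e x y) p))"
        unfolding me_def mu_lam_e_def ex by (simp add: sum_pair_UNIV)
      show "\<forall>p\<in>UNIV. 0 \<le> (\<lambda>(x,y). eq e x y) p" using eq0 e by auto
      show "sum (\<lambda>(x,y). eq e x y) UNIV = 1" using eq1 e by (simp add: sum_pair_UNIV)
    qed (use eta in auto)
    moreover have "ln (real (card (UNIV::('x\<times>'x) set))) = 2 * ln d"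
      by (simp add: d_def card_cartesian_product ln_mult flip: UNIV_Times_UNIV)
    ultimately show ?thesis by (simp add: sum_pair_UNIV)
  qed
  have fV: "finite V" and EV: "E \<subseteq> V \<times> V" using G by (auto simp: graph_ok_def)
  have fE: "finite E" using fV EV finite_subset by blast
  define Dv where "Dv = (\<lambda>i x. mv i x - mq i x)"
  define De where "De = (\<lambda>e x y. me e x y - eq e x y)"
  define g where "g = (\<lambda>e k. \<Sum>x\<in>UNIV. lam e k x * Dv k x)"
  have sumL1: "(\<Sum>i\<in>V. \<Sum>x\<in>UNIV. L i x * Dv i x) = (\<Sum>i\<in>V. \<Sum>e\<in>nbr E i. g e i)"
  proof (rule sum.cong[OF refl])
    fix i
    have "(\<Sum>x\<in>UNIV. L i x * Dv i x) = (\<Sum>x\<in>UNIV. \<Sum>e\<in>nbr E i. lam e i x * Dv i x)"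
      unfolding L_def by (simp only: sum_distrib_right)
    also have "\<dots> = (\<Sum>e\<in>nbr E i. \<Sum>x\<in>UNIV. lam e i x * Dv i x)" by (rule sum.swap)
    finally show "(\<Sum>x\<in>UNIV. L i x * Dv i x) = (\<Sum>e\<in>nbr E i. g e i)" unfolding g_def .
  qed
  also have "\<dots> = (\<Sum>e\<in>E. g e (fst e) + g e (snd e))" by (rule nbr_swap[OF G])
  also have "\<dots> = (\<Sum>e\<in>E. \<Sum>x\<in>UNIV. \<Sum>y\<in>UNIV. (lam e (fst e) x + lam e (snd e) y) * De e x y)"
  proof (rule sum.cong[OF refl])
    fix e assume e: "e \<in> E"
    have r: "(\<Sum>y\<in>UNIV. De e x y) = Dv (fst e) x" for x
      using spec[OF bspec[OF cr e], of x] unfolding De_def Dv_def me_def mv_def by (simp only: sum_subtractf)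
    have c: "(\<Sum>x\<in>UNIV. De e x y) = Dv (snd e) y" for y
      using spec[OF bspec[OF cc e], of y] unfolding De_def Dv_def me_def mv_def by (simp only: sum_subtractf)
    have "(\<Sum>x\<in>UNIV. \<Sum>y\<in>UNIV. (lam e (fst e) x + lam e (snd e) y) * De e x y)
       = (\<Sum>x\<in>UNIV. \<Sum>y\<in>UNIV. lam e (fst e) x * De e x y) + (\<Sum>x\<in>UNIV. \<Sum>y\<in>UNIV. lam e (snd e) y * De e x y)"
      by (simp add: distrib_right sum.distrib)
    also have "\<dots> = (\<Sum>x\<in>UNIV. lam e (fst e) x * (\<Sum>y\<in>UNIV. De e x y)) + (\<Sum>y\<in>UNIV. lam e (snd e) y * (\<Sum>x\<in>UNIV. De e x y))"
    proof -
      have "(\<Sum>x\<in>UNIV. \<Sum>y\<in>UNIV. lam e (snd e) y * De e x y) = (\<Sum>y\<in>UNIV. \<Sum>x\<in>UNIV. lam e (snd e) y * De e x y)"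
        by (rule sum.swap)
      thus ?thesis by (simp only: sum_distrib_left)
    qed
    also have "\<dots> = g e (fst e) + g e (snd e)" by (simp add: g_def r c)
    finally show "g e (fst e) + g e (snd e) = (\<Sum>x\<in>UNIV. \<Sum>y\<in>UNIV. (lam e (fst e) x + lam e (snd e) y) * De e x y)" by simp
  qed
  finally have sumL: "(\<Sum>i\<in>V. \<Sum>x\<in>UNIV. L i x * Dv i x)
      = (\<Sum>e\<in>E. \<Sum>x\<in>UNIV. \<Sum>y\<in>UNIV. (lam e (fst e) x + lam e (snd e) y) * De e x y)" .
  have bound: "(\<Sum>i\<in>V. \<Sum>x\<in>UNIV. a i x * Dv i x) + (\<Sum>e\<in>E. \<Sum>x\<in>UNIV. \<Sum>y\<in>UNIV. b e x y * De e x y)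
       \<le> (\<Sum>i\<in>V. ln d / \<eta>) + (\<Sum>e\<in>E. 2 * ln d / \<eta>)"
    using GV GE unfolding Dv_def De_def by (intro add_mono sum_mono) auto
  have s1: "(\<Sum>i\<in>V. \<Sum>x\<in>UNIV. a i x * Dv i x)
     = (\<Sum>i\<in>V. \<Sum>x\<in>UNIV. Ci i x * Dv i x) - (\<Sum>i\<in>V. \<Sum>x\<in>UNIV. L i x * Dv i x)"
    unfolding a_def by (simp add: left_diff_distrib sum_subtractf)
  have s2: "(\<Sum>e\<in>E. \<Sum>x\<in>UNIV. \<Sum>y\<in>UNIV. b e x y * De e x y)
     = (\<Sum>e\<in>E. \<Sum>x\<in>UNIV. \<Sum>y\<in>UNIV. Ce e x y * De e x y)
       + (\<Sum>e\<in>E. \<Sum>x\<in>UNIV. \<Sum>y\<in>UNIV. (lam e (fst e) x + lam e (snd e) y) * De e x y)"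
    unfolding b_def by (simp only: distrib_right sum.distrib)
  have c1: "(\<Sum>i\<in>V. \<Sum>x\<in>UNIV. Ci i x * Dv i x)
     = (\<Sum>i\<in>V. \<Sum>x\<in>UNIV. Ci i x * mv i x) - (\<Sum>i\<in>V. \<Sum>x\<in>UNIV. Ci i x * mq i x)"
    unfolding Dv_def by (simp only: right_diff_distrib sum_subtractf)
  have c2: "(\<Sum>e\<in>E. \<Sum>x\<in>UNIV. \<Sum>y\<in>UNIV. Ce e x y * De e x y)
     = (\<Sum>e\<in>E. \<Sum>x\<in>UNIV. \<Sum>y\<in>UNIV. Ce e x y * me e x y) - (\<Sum>e\<in>E. \<Sum>x\<in>UNIV. \<Sum>y\<in>UNIV. Ce e x y * eq e x y)"
    unfolding De_def by (simp only: right_diff_distrib sum_subtractf)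
  have cdiff: "cost V E Ci Ce mv me - cost V E Ci Ce mq eq
     = (\<Sum>i\<in>V. \<Sum>x\<in>UNIV. Ci i x * Dv i x) + (\<Sum>e\<in>E. \<Sum>x\<in>UNIV. \<Sum>y\<in>UNIV. Ce e x y * De e x y)"
    unfolding cost_def c1 c2 by simp
  have "cost V E Ci Ce mv me - cost V E Ci Ce mq eq \<le> (\<Sum>i\<in>V. ln d / \<eta>) + (\<Sum>e\<in>E. 2 * ln d / \<eta>)"
    using bound unfolding s1 s2 sumL cdiff by simp
  also have "\<dots> = (real (card V) + 2 * real (card E)) * ln d / \<eta>" by (simp add: add_divide_distrib algebra_simps)
  finally show ?thesis by (simp add: mv_def me_def d_def)
qed



lemma sum_mult_abs_le:
  fixes K :: real
  assumes "\<forall>x\<in>A. \<bar>C x\<bar> \<le> K"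
  shows "(\<Sum>x\<in>A. C x * D x) \<le> K * (\<Sum>x\<in>A. \<bar>D x\<bar>)"
proof -
  have "(\<Sum>x\<in>A. C x * D x) \<le> (\<Sum>x\<in>A. K * \<bar>D x\<bar>)"
  proof (rule sum_mono)
    fix x assume "x \<in> A"
    hence "\<bar>C x\<bar> \<le> K" using assms by auto
    hence "\<bar>C x\<bar> * \<bar>D x\<bar> \<le> K * \<bar>D x\<bar>" by (rule mult_right_mono) simp
    thus "C x * D x \<le> K * \<bar>D x\<bar>" by (metis abs_ge_self abs_mult order_trans)
  qed
  thus ?thesis by (simp add: sum_distrib_left)
qed

lemma sum_mult_abs_le2:
  fixes K :: real
  assumes "\<forall>x\<in>A. \<forall>y\<in>B. \<bar>C x y\<bar> \<le> K" and K: "K \<ge> 0"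
  shows "(\<Sum>x\<in>A. \<Sum>y\<in>B. C x y * D x y) \<le> K * (\<Sum>x\<in>A. \<Sum>y\<in>B. \<bar>D x y\<bar>)"
proof -
  have "(\<Sum>x\<in>A. \<Sum>y\<in>B. C x y * D x y) \<le> (\<Sum>x\<in>A. K * (\<Sum>y\<in>B. \<bar>D x y\<bar>))"
    using assms by (intro sum_mono sum_mult_abs_le) auto
  thus ?thesis by (simp add: sum_distrib_left)
qed

lemma cost_abs:
  fixes K :: real
  assumes "\<forall>i\<in>V. \<forall>x. \<bar>Ci i x\<bar> \<le> K" "\<forall>e\<in>E. \<forall>x y. \<bar>Ce e x y\<bar> \<le> K" "K \<ge> 0"
    and "\<forall>i\<in>V. (\<Sum>x\<in>UNIV. \<bar>mv i x\<bar>) = 1" "\<forall>e\<in>E. (\<Sum>x\<in>UNIV. \<Sum>y\<in>UNIV. \<bar>me e x y\<bar>) = 1"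
  shows "\<bar>cost V E Ci Ce mv me\<bar> \<le> (real (card V) + real (card E)) * K"
proof -
  have a: "\<bar>\<Sum>x\<in>UNIV. Ci i x * mv i x\<bar> \<le> K" if "i \<in> V" for i
  proof -
    have "(\<Sum>x\<in>UNIV. Ci i x * mv i x) \<le> K * (\<Sum>x\<in>UNIV. \<bar>mv i x\<bar>)"
      using assms that by (intro sum_mult_abs_le) auto
    moreover have "(\<Sum>x\<in>UNIV. (- Ci i x) * mv i x) \<le> K * (\<Sum>x\<in>UNIV. \<bar>mv i x\<bar>)"
      using assms that by (intro sum_mult_abs_le) auto
    ultimately show ?thesis using assms that by (simp add: sum_negf)
  qed
  have b: "\<bar>\<Sum>x\<in>UNIV. \<Sum>y\<in>UNIV. Ce e x y * me e x y\<bar> \<le> K" if "e \<in> E" for e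
  proof -
    have "(\<Sum>x\<in>UNIV. \<Sum>y\<in>UNIV. Ce e x y * me e x y) \<le> K * (\<Sum>x\<in>UNIV. \<Sum>y\<in>UNIV. \<bar>me e x y\<bar>)"
      using assms that by (intro sum_mult_abs_le2) auto
    moreover have "(\<Sum>x\<in>UNIV. \<Sum>y\<in>UNIV. (- Ce e x y) * me e x y) \<le> K * (\<Sum>x\<in>UNIV. \<Sum>y\<in>UNIV. \<bar>me e x y\<bar>)"
      using assms that by (intro sum_mult_abs_le2) auto
    ultimately show ?thesis using assms that by (simp add: sum_negf)
  qed
  have "\<bar>cost V E Ci Ce mv me\<bar> \<le> (\<Sum>i\<in>V. \<bar>\<Sum>x\<in>UNIV. Ci i x * mv i x\<bar>) + (\<Sum>e\<in>E. \<bar>\<Sum>x\<in>UNIV. \<Sum>y\<in>UNIV. Ce e x y * me e x y\<bar>)"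
    unfolding cost_def by (intro order_trans[OF abs_triangle_ineq] add_mono sum_abs)
  also have "\<dots> \<le> (\<Sum>i\<in>V. K) + (\<Sum>e\<in>E. K)" using a b by (intro add_mono sum_mono) auto
  also have "\<dots> = (real (card V) + real (card E)) * K" by (simp add: algebra_simps)
  finally show ?thesis .
qed

lemma sum_lin2:
  fixes f g :: "'x::finite \<Rightarrow> real"
  shows "(\<Sum>x\<in>UNIV. a * f x + b * g x + c) = a * (\<Sum>x\<in>UNIV. f x) + b * (\<Sum>x\<in>UNIV. g x) + real (card (UNIV::'x::finite set)) * (c::real)"
  by (simp add: sum.distrib sum_distrib_left)

theorem proposition4:
  fixes V :: "'v set" and E :: "('v \<times> 'v) set"
    and Ci :: "'v \<Rightarrow> 'x::finite \<Rightarrow> real" and Ce :: "'v \<times> 'v \<Rightarrow> 'x \<Rightarrow> 'x \<Rightarrow> real"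
    and \<eta> :: real and lam :: "'v \<times> 'v \<Rightarrow> 'v \<Rightarrow> 'x \<Rightarrow> real"
    and mv_opt :: "'v \<Rightarrow> 'x \<Rightarrow> real" and me_opt :: "'v \<times> 'v \<Rightarrow> 'x \<Rightarrow> 'x \<Rightarrow> real"
  assumes G: "graph_ok V E"
    and d2: "card (UNIV :: 'x set) \<ge> 2"
    and eta: "\<eta> > 0"
    and opt_in: "L2 V E mv_opt me_opt"
    and opt_min: "\<forall>mv me. L2 V E mv me \<longrightarrow> cost V E Ci Ce mv_opt me_opt \<le> cost V E Ci Ce mv me"
  shows
    "let n = real (card V); m = real (card E); d = real (card (UNIV :: 'x set));
         Cn = cost_norm V E Ci Ce;
         \<delta> = Max {slack_norm \<eta> E Ci Ce lam e i | e i. e \<in> E \<and> (i = fst e \<or> i = snd e)}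
     in cost V E Ci Ce (proj_v \<eta> E Ci lam) (proj_e \<eta> E Ci Ce lam)
          - cost V E Ci Ce mv_opt me_opt
        \<le> 16 * (m + n) * d * Cn * \<delta>
           + 4 * Cn * (\<Sum>e\<in>E. slack_norm \<eta> E Ci Ce lam e (fst e) + slack_norm \<eta> E Ci Ce lam e (snd e))
           + (n * ln d + 2 * m * ln d) / \<eta>"
proof (cases "V = {}")
  case True
  hence "E = {}" using G by (auto simp: graph_ok_def)
  with True show ?thesis by (simp add: cost_def Let_def)
next
  case False
  define n where "n = real (card V)"
  define m where "m = real (card E)"
  define d where "d = real (card (UNIV :: 'x set))"
  define Cn where "Cn = cost_norm V E Ci Ce"
  define sn where "sn = slack_norm \<eta> E Ci Ce lam"
  define \<delta> where "\<delta> = Max {sn e i | e i. e \<in> E \<and> (i = fst e \<or> i = snd e)}"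
  define SUMN where "SUMN = (\<Sum>e\<in>E. sn e (fst e) + sn e (snd e))"
  define mv where "mv = mu_lam_v \<eta> E Ci lam"
  define me where "me = mu_lam_e \<eta> Ce lam"
  define pe where "pe = proj_e \<eta> E Ci Ce lam"
  define mo where "mo = mv_opt"
  define eo where "eo = me_opt"
  have fV: "finite V" and EV: "E \<subseteq> V \<times> V" using G by (auto simp: graph_ok_def)
  have fE: "finite E" using fV EV finite_subset by blast
  obtain i0 where i0: "i0 \<in> V" using False by auto
  have Ene: "E \<noteq> {}" using G i0 by (auto simp: graph_ok_def)
  have ends: "fst e \<in> V" "snd e \<in> V" "fst e \<noteq> snd e" if "e \<in> E" for e
    using G that by (cases e; auto simp: graph_ok_def)+
  have dpos: "d > 0" and d2': "d \<ge> 2" using d2 by (auto simp: d_def)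
  have finC: "finite ({\<bar>Ci i x\<bar> | i x. i \<in> V} \<union> {\<bar>Ce e x y\<bar> | e x y. e \<in> E})"
  proof -
    have A: "{\<bar>Ci i x\<bar> | i x. i \<in> V} = (\<lambda>(i,x). \<bar>Ci i x\<bar>) ` (V \<times> UNIV)" by auto
    have B: "{\<bar>Ce e x y\<bar> | e x y. e \<in> E} \<subseteq> (\<lambda>(e,x,y). \<bar>Ce e x y\<bar>) ` (E \<times> UNIV \<times> UNIV)"
    proof (rule subsetI)
      fix u assume "u \<in> {\<bar>Ce e x y\<bar> | e x y. e \<in> E}"
      then obtain e x y where "u = \<bar>Ce e x y\<bar>" "e \<in> E" by blast
      thus "u \<in> (\<lambda>(e,x,y). \<bar>Ce e x y\<bar>) ` (E \<times> UNIV \<times> UNIV)" by (intro rev_image_eqI[of "(e,x,y)"]) auto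
    qed
    have "finite {\<bar>Ce e x y\<bar> | e x y. e \<in> E}" by (rule finite_subset[OF B]) (simp add: fE)
    thus ?thesis using A fV by simp
  qed
  have CnCi: "\<bar>Ci i x\<bar> \<le> Cn" if "i \<in> V" for i x
    unfolding Cn_def cost_norm_def by (rule Max_ge[OF finC]) (use that in blast)
  have CnCe: "\<bar>Ce e x y\<bar> \<le> Cn" if "e \<in> E" for e x y
    unfolding Cn_def cost_norm_def by (rule Max_ge[OF finC]) (use that in blast)
  have Cn0: "Cn \<ge> 0" using CnCi[OF i0] abs_ge_zero order_trans by blast
  have mv_pos: "mv i x > 0" for i x
    unfolding mv_def mu_lam_v_def by (intro divide_pos_pos exp_gt_zero sum_pos) auto
  have mv_sum: "(\<Sum>x\<in>UNIV. mv i x) = 1" for i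
  proof -
    have "(\<Sum>z\<in>UNIV. exp (- \<eta> * Ci i z + \<eta> * (\<Sum>e\<in>nbr E i. lam e i z))) > 0" by (intro sum_pos) auto
    thus ?thesis unfolding mv_def mu_lam_v_def by (simp add: sum_divide_distrib[symmetric])
  qed
  have me_pos: "me e x y > 0" for e x y
    unfolding me_def mu_lam_e_def by (intro divide_pos_pos exp_gt_zero sum_pos) auto
  have me_sum: "(\<Sum>x\<in>UNIV. \<Sum>y\<in>UNIV. me e x y) = 1" for e
  proof -
    have "(\<Sum>z\<in>UNIV. \<Sum>w\<in>UNIV. exp (- \<eta> * Ce e z w - \<eta> * (lam e (fst e) z + lam e (snd e) w))) > 0"
      by (intro sum_pos) auto
    thus ?thesis unfolding me_def mu_lam_e_def by (simp add: sum_divide_distrib[symmetric])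
  qed
  define nf where "nf = (\<lambda>e x. (\<Sum>y\<in>UNIV. me e x y) - mv (fst e) x)"
  define ns where "ns = (\<lambda>e y. (\<Sum>x\<in>UNIV. me e x y) - mv (snd e) y)"
  have sn_f: "sn e (fst e) = (\<Sum>x\<in>UNIV. \<bar>nf e x\<bar>)" for e
    unfolding sn_def slack_norm_def S_lam_def nf_def me_def mv_def by simp
  have sn_s: "sn e (snd e) = (\<Sum>y\<in>UNIV. \<bar>ns e y\<bar>)" if "e \<in> E" for e
    using ends(3)[OF that] unfolding sn_def slack_norm_def S_lam_def ns_def me_def mv_def by simp
  have sn0: "sn e k \<ge> 0" for e k unfolding sn_def slack_norm_def by (simp add: sum_nonneg)
  have finD: "finite {sn e i | e i. e \<in> E \<and> (i = fst e \<or> i = snd e)}"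
  proof -
    have B: "{sn e i | e i. e \<in> E \<and> (i = fst e \<or> i = snd e)} \<subseteq> (\<lambda>e. sn e (fst e)) ` E \<union> (\<lambda>e. sn e (snd e)) ` E"
    proof (rule subsetI)
      fix u assume "u \<in> {sn e i | e i. e \<in> E \<and> (i = fst e \<or> i = snd e)}"
      then obtain e i where u: "u = sn e i" "e \<in> E" "i = fst e \<or> i = snd e" by blast
      thus "u \<in> (\<lambda>e. sn e (fst e)) ` E \<union> (\<lambda>e. sn e (snd e)) ` E" by blast
    qed
    show ?thesis by (rule finite_subset[OF B]) (simp add: fE)
  qed
  have snd_f: "sn e (fst e) \<le> \<delta>" if "e \<in> E" for e
    unfolding \<delta>_def by (rule Max_ge[OF finD]) (use that in blast)
  have snd_s: "sn e (snd e) \<le> \<delta>" if "e \<in> E" for e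
    unfolding \<delta>_def by (rule Max_ge[OF finD]) (use that in blast)
  have \<delta>0: "\<delta> \<ge> 0" using Ene snd_f sn0 by (meson all_not_in_conv order_trans)
  have nf_le: "\<bar>nf e x\<bar> \<le> \<delta>" if "e \<in> E" for e x
  proof -
    have "\<bar>nf e x\<bar> \<le> (\<Sum>x\<in>UNIV. \<bar>nf e x\<bar>)" by (rule member_le_sum) auto
    thus ?thesis using snd_f[OF that] sn_f[of e] by simp
  qed
  have ns_le: "\<bar>ns e y\<bar> \<le> \<delta>" if "e \<in> E" for e y
  proof -
    have "\<bar>ns e y\<bar> \<le> (\<Sum>y\<in>UNIV. \<bar>ns e y\<bar>)" by (rule member_le_sum) auto
    thus ?thesis using snd_s[OF that] sn_s[OF that] by simp
  qed
  have SUMN0: "SUMN \<ge> 0" unfolding SUMN_def using sn0 by (simp add: sum_nonneg add_nonneg_nonneg)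
  have lnd0: "ln d \<ge> 0" using d2' by simp
  have mo0: "mo i x \<ge> 0" and mo1: "(\<Sum>x\<in>UNIV. mo i x) = 1" if "i \<in> V" for i x
    using opt_in that by (auto simp: L2_def simplex_def mo_def)
  have eo0: "eo e x y \<ge> 0" and eor: "(\<Sum>y\<in>UNIV. eo e x y) = mo (fst e) x"
     and eoc: "(\<Sum>x\<in>UNIV. eo e x y) = mo (snd e) y" if "e \<in> E" for e x y
    using opt_in that by (auto simp: L2_def eo_def mo_def)
  have eo1: "(\<Sum>x\<in>UNIV. \<Sum>y\<in>UNIV. eo e x y) = 1" if "e \<in> E" for e
    using eor[OF that] mo1[OF ends(1)[OF that]] by simp
  have stepR: "cost V E Ci Ce mv pe - cost V E Ci Ce mv me \<le> 2 * Cn * SUMN"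
  proof -
    have "(\<Sum>e\<in>E. \<Sum>x\<in>UNIV. \<Sum>y\<in>UNIV. Ce e x y * (pe e x y - me e x y))
        = (\<Sum>e\<in>E. \<Sum>x\<in>UNIV. \<Sum>y\<in>UNIV. Ce e x y * pe e x y) - (\<Sum>e\<in>E. \<Sum>x\<in>UNIV. \<Sum>y\<in>UNIV. Ce e x y * me e x y)"
      by (simp only: right_diff_distrib sum_subtractf)
    hence eq: "cost V E Ci Ce mv pe - cost V E Ci Ce mv me = (\<Sum>e\<in>E. \<Sum>x\<in>UNIV. \<Sum>y\<in>UNIV. Ce e x y * (pe e x y - me e x y))"
      unfolding cost_def by linarith
    have each: "(\<Sum>x\<in>UNIV. \<Sum>y\<in>UNIV. Ce e x y * (pe e x y - me e x y)) \<le> 2 * Cn * (sn e (fst e) + sn e (snd e))"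
      if e: "e \<in> E" for e
    proof -
      have "(\<Sum>x\<in>UNIV. \<Sum>y\<in>UNIV. Ce e x y * (pe e x y - me e x y)) \<le> Cn * (\<Sum>x\<in>UNIV. \<Sum>y\<in>UNIV. \<bar>pe e x y - me e x y\<bar>)"
        using CnCe[OF e] Cn0 by (intro sum_mult_abs_le2) auto
      also have "(\<Sum>x\<in>UNIV. \<Sum>y\<in>UNIV. \<bar>pe e x y - me e x y\<bar>) \<le> 2 * (sn e (fst e) + sn e (snd e))"
      proof -
        have pe_eq: "pe e = round_map (me e) (mv (fst e)) (mv (snd e))"
          unfolding pe_def proj_e_def me_def mv_def ..
        have "(\<Sum>x\<in>UNIV. \<Sum>y\<in>UNIV. \<bar>round_map (me e) (mv (fst e)) (mv (snd e)) x y - me e x y\<bar>)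
          \<le> 2 * ((\<Sum>x\<in>UNIV. \<bar>(\<Sum>y\<in>UNIV. me e x y) - mv (fst e) x\<bar>) + (\<Sum>y\<in>UNIV. \<bar>(\<Sum>x\<in>UNIV. me e x y) - mv (snd e) y\<bar>))"
          by (rule round_bound) (auto intro: less_imp_le[OF me_pos] less_imp_le[OF mv_pos] simp: mv_sum me_sum)
        thus ?thesis unfolding pe_eq sn_f sn_s[OF e] nf_def ns_def .
      qed
      hence "Cn * (\<Sum>x\<in>UNIV. \<Sum>y\<in>UNIV. \<bar>pe e x y - me e x y\<bar>) \<le> Cn * (2 * (sn e (fst e) + sn e (snd e)))"
        using Cn0 by (rule mult_left_mono)
      finally show ?thesis by (simp add: algebra_simps)
    qed
    have "cost V E Ci Ce mv pe - cost V E Ci Ce mv me \<le> (\<Sum>e\<in>E. 2 * Cn * (sn e (fst e) + sn e (snd e)))"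
      unfolding eq using each by (intro sum_mono) auto
    also have "\<dots> = 2 * Cn * SUMN" unfolding SUMN_def by (simp add: sum_distrib_left)
    finally show ?thesis .
  qed
  have stepO: "cost V E Ci Ce mv me - cost V E Ci Ce mo eo \<le> 4 * d * \<delta> * (n + m) * Cn + Cn * SUMN + (n + 2 * m) * ln d / \<eta>"
  proof (cases "2 * d * \<delta> \<le> 1")
    case False
    have c1: "\<bar>cost V E Ci Ce mv me\<bar> \<le> (n + m) * Cn" unfolding n_def m_def
      using CnCi CnCe Cn0 mv_pos mv_sum me_pos me_sum by (intro cost_abs) (auto simp: abs_of_pos)
    have c2: "\<bar>cost V E Ci Ce mo eo\<bar> \<le> (n + m) * Cn" unfolding n_def m_def
      using CnCi CnCe Cn0 mo0 mo1 eo0 eo1 by (intro cost_abs) (auto simp: abs_of_nonneg)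
    have nm0: "(n + m) * Cn \<ge> 0" using Cn0 by (simp add: n_def m_def)
    have "(n + m) * Cn * 1 \<le> (n + m) * Cn * (2 * d * \<delta>)" using False nm0 by (intro mult_left_mono) auto
    moreover have "4 * d * \<delta> * (n + m) * Cn = 2 * ((n + m) * Cn * (2 * d * \<delta>))" by (simp add: algebra_simps)
    moreover have "Cn * SUMN \<ge> 0" using Cn0 SUMN0 by simp
    moreover have "(n + 2 * m) * ln d / \<eta> \<ge> 0" using lnd0 eta by (simp add: n_def m_def)
    ultimately show ?thesis using c1 c2 by linarith
  next
    case True
    define t where "t = 2 * d * \<delta>"
    have t0: "t \<ge> 0" and t1: "t \<le> 1" using True dpos \<delta>0 by (auto simp: t_def)
    define mq where "mq = (\<lambda>i x. (1 - t) * mo i x + t / d)"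
    define eq where "eq = (\<lambda>e x y. (1 - t) * eo e x y + t / (d * d) + (1/d) * nf e x + (1/d) * ns e y)"
    have cardd: "real (card (UNIV :: 'x set)) = d" by (simp add: d_def)
    have nf_sum: "(\<Sum>x\<in>UNIV. nf e x) = 0" for e
      unfolding nf_def by (simp add: sum_subtractf me_sum mv_sum)
    have ns_sum: "(\<Sum>y\<in>UNIV. ns e y) = 0" for e
    proof -
      have "(\<Sum>y\<in>UNIV. \<Sum>x\<in>UNIV. me e x y) = 1" using me_sum[of e] sum.swap[of "\<lambda>y x. me e x y" UNIV UNIV] by simp
      thus ?thesis unfolding ns_def by (simp add: sum_subtractf mv_sum)
    qed
    have mq_simp: "\<forall>i\<in>V. simplex (mq i)"
    proof
      fix i assume i: "i \<in> V"
      have "mq i x \<ge> 0" for x unfolding mq_def using mo0[OF i] t1 t0 dpos by simp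
      moreover have "(\<Sum>x\<in>UNIV. mq i x) = 1"
      proof -
        have "(\<Sum>x\<in>UNIV. mq i x) = (\<Sum>x\<in>UNIV. (1 - t) * mo i x + 0 * mo i x + t / d)" unfolding mq_def by simp
        also have "\<dots> = (1 - t) * 1 + 0 + d * (t / d)" unfolding sum_lin2 cardd mo1[OF i] by simp
        also have "\<dots> = 1" using dpos by simp
        finally show ?thesis .
      qed
      ultimately show "simplex (mq i)" by (simp add: simplex_def)
    qed
    have eq_row: "(\<Sum>y\<in>UNIV. eq e x y) = (1 - t) * mo (fst e) x + t / d + nf e x" if e: "e \<in> E" for e x
    proof -
      have "(\<Sum>y\<in>UNIV. eq e x y) = (\<Sum>y\<in>UNIV. (1 - t) * eo e x y + (1/d) * ns e y + (t / (d * d) + (1/d) * nf e x))"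
        unfolding eq_def by (intro sum.cong refl) linarith
      also have "\<dots> = (1 - t) * mo (fst e) x + (1/d) * 0 + d * (t / (d * d) + (1/d) * nf e x)"
        unfolding sum_lin2 cardd eor[OF e] ns_sum ..
      also have "\<dots> = (1 - t) * mo (fst e) x + t / d + nf e x" using dpos by (simp add: field_simps)
      finally show ?thesis .
    qed
    have eq_col: "(\<Sum>x\<in>UNIV. eq e x y) = (1 - t) * mo (snd e) y + t / d + ns e y" if e: "e \<in> E" for e y
    proof -
      have "(\<Sum>x\<in>UNIV. eq e x y) = (\<Sum>x\<in>UNIV. (1 - t) * eo e x y + (1/d) * nf e x + (t / (d * d) + (1/d) * ns e y))"
        unfolding eq_def by (intro sum.cong refl) linarith
      also have "\<dots> = (1 - t) * mo (snd e) y + (1/d) * 0 + d * (t / (d * d) + (1/d) * ns e y)"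
        unfolding sum_lin2 cardd eoc[OF e] nf_sum ..
      also have "\<dots> = (1 - t) * mo (snd e) y + t / d + ns e y" using dpos by (simp add: field_simps)
      finally show ?thesis .
    qed
    have eq0: "\<forall>e\<in>E. \<forall>x y. eq e x y \<ge> 0"
    proof (intro ballI allI)
      fix e x y assume e: "e \<in> E"
      have a: "t / (d * d) + (1/d) * nf e x + (1/d) * ns e y = (2 * \<delta> + nf e x + ns e y) / d"
        using dpos by (simp add: t_def field_simps)
      have "2 * \<delta> + nf e x + ns e y \<ge> 0" using nf_le[OF e, of x] ns_le[OF e, of y] by linarith
      hence b: "t / (d * d) + (1/d) * nf e x + (1/d) * ns e y \<ge> 0" unfolding a using dpos by simp
      have "(1 - t) * eo e x y \<ge> 0" using t1 eo0[OF e] by simp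
      thus "eq e x y \<ge> 0" using b unfolding eq_def by linarith
    qed
    have eq1: "\<forall>e\<in>E. (\<Sum>x\<in>UNIV. \<Sum>y\<in>UNIV. eq e x y) = 1"
    proof
      fix e assume e: "e \<in> E"
      have "(\<Sum>x\<in>UNIV. \<Sum>y\<in>UNIV. eq e x y) = (\<Sum>x\<in>UNIV. (1 - t) * mo (fst e) x + 1 * nf e x + t / d)"
        by (intro sum.cong refl) (simp add: eq_row[OF e])
      also have "\<dots> = (1 - t) * 1 + 1 * 0 + d * (t / d)"
        unfolding sum_lin2 cardd mo1[OF ends(1)[OF e]] nf_sum ..
      also have "\<dots> = 1" using dpos by simp
      finally show "(\<Sum>x\<in>UNIV. \<Sum>y\<in>UNIV. eq e x y) = 1" .
    qed
    have lag: "cost V E Ci Ce mv me - cost V E Ci Ce mq eq \<le> (n + 2 * m) * ln d / \<eta>"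
      unfolding mv_def me_def n_def m_def d_def
    proof (rule lagrange[OF G eta mq_simp eq0 eq1])
      show "\<forall>e\<in>E. \<forall>x. (\<Sum>y\<in>UNIV. eq e x y) - mq (fst e) x
              = (\<Sum>y\<in>UNIV. mu_lam_e \<eta> Ce lam e x y) - mu_lam_v \<eta> E Ci lam (fst e) x"
        using eq_row unfolding mq_def nf_def me_def mv_def by simp
      show "\<forall>e\<in>E. \<forall>y. (\<Sum>x\<in>UNIV. eq e x y) - mq (snd e) y
              = (\<Sum>x\<in>UNIV. mu_lam_e \<eta> Ce lam e x y) - mu_lam_v \<eta> E Ci lam (snd e) y"
        using eq_col unfolding mq_def ns_def me_def mv_def by simp
    qed
    have pv: "(\<Sum>x\<in>UNIV. Ci i x * (mq i x - mo i x)) \<le> Cn * (2 * t)" if i: "i \<in> V" for i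
    proof -
      have "(\<Sum>x\<in>UNIV. Ci i x * (mq i x - mo i x)) \<le> Cn * (\<Sum>x\<in>UNIV. \<bar>mq i x - mo i x\<bar>)"
        using CnCi[OF i] by (intro sum_mult_abs_le) auto
      also have "(\<Sum>x\<in>UNIV. \<bar>mq i x - mo i x\<bar>) \<le> (\<Sum>x\<in>UNIV. t * mo i x + 0 * mo i x + t / d)"
      proof (rule sum_mono)
        fix x
        have "mq i x - mo i x = t / d - t * mo i x" unfolding mq_def by (simp add: algebra_simps)
        moreover have "t * mo i x \<ge> 0" "t / d \<ge> 0" using t0 mo0[OF i] dpos by auto
        ultimately show "\<bar>mq i x - mo i x\<bar> \<le> t * mo i x + 0 * mo i x + t / d" by simp
      qed
      also have "\<dots> = 2 * t" unfolding sum_lin2 cardd mo1[OF i] using dpos by simp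
      finally show ?thesis using Cn0 by (simp add: mult_left_mono)
    qed
    have pe': "(\<Sum>x\<in>UNIV. \<Sum>y\<in>UNIV. Ce e x y * (eq e x y - eo e x y)) \<le> Cn * (2 * t + sn e (fst e) + sn e (snd e))"
      if e: "e \<in> E" for e
    proof -
      have "(\<Sum>x\<in>UNIV. \<Sum>y\<in>UNIV. Ce e x y * (eq e x y - eo e x y)) \<le> Cn * (\<Sum>x\<in>UNIV. \<Sum>y\<in>UNIV. \<bar>eq e x y - eo e x y\<bar>)"
        using CnCe[OF e] Cn0 by (intro sum_mult_abs_le2) auto
      also have "(\<Sum>x\<in>UNIV. \<Sum>y\<in>UNIV. \<bar>eq e x y - eo e x y\<bar>)
          \<le> (\<Sum>x\<in>UNIV. \<Sum>y\<in>UNIV. t * eo e x y + (1/d) * \<bar>ns e y\<bar> + (t / (d * d) + (1/d) * \<bar>nf e x\<bar>))"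
      proof (intro sum_mono)
        fix x y
        have "eq e x y - eo e x y = t / (d * d) + (1/d) * nf e x + (1/d) * ns e y - t * eo e x y"
          unfolding eq_def by (simp add: algebra_simps)
        moreover have "t * eo e x y \<ge> 0" "t / (d * d) \<ge> 0" using t0 eo0[OF e] dpos by auto
        moreover have "\<bar>(1/d) * nf e x\<bar> = (1/d) * \<bar>nf e x\<bar>" "\<bar>(1/d) * ns e y\<bar> = (1/d) * \<bar>ns e y\<bar>"
          using dpos by (auto simp: abs_mult)
        ultimately show "\<bar>eq e x y - eo e x y\<bar> \<le> t * eo e x y + (1/d) * \<bar>ns e y\<bar> + (t / (d * d) + (1/d) * \<bar>nf e x\<bar>)"
          by linarith
      qed
      also have "\<dots> = (\<Sum>x\<in>UNIV. t * mo (fst e) x + 1 * \<bar>nf e x\<bar> + ((1/d) * sn e (snd e) + t / d))"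
      proof (intro sum.cong refl)
        fix x
        have "(\<Sum>y\<in>UNIV. t * eo e x y + (1/d) * \<bar>ns e y\<bar> + (t / (d * d) + (1/d) * \<bar>nf e x\<bar>))
            = t * mo (fst e) x + (1/d) * sn e (snd e) + d * (t / (d * d) + (1/d) * \<bar>nf e x\<bar>)"
          unfolding sum_lin2 cardd eor[OF e] sn_s[OF e] ..
        also have "\<dots> = t * mo (fst e) x + 1 * \<bar>nf e x\<bar> + ((1/d) * sn e (snd e) + t / d)"
          using dpos by (simp add: field_simps)
        finally show "(\<Sum>y\<in>UNIV. t * eo e x y + (1/d) * \<bar>ns e y\<bar> + (t / (d * d) + (1/d) * \<bar>nf e x\<bar>))
            = t * mo (fst e) x + 1 * \<bar>nf e x\<bar> + ((1/d) * sn e (snd e) + t / d)" .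
      qed
      also have "\<dots> = t * 1 + 1 * sn e (fst e) + d * ((1/d) * sn e (snd e) + t / d)"
        unfolding sum_lin2 cardd mo1[OF ends(1)[OF e]] sn_f ..
      also have "\<dots> = 2 * t + sn e (fst e) + sn e (snd e)" using dpos by (simp add: field_simps)
      finally show ?thesis using Cn0 by (simp add: mult_left_mono)
    qed
    have c1: "(\<Sum>i\<in>V. \<Sum>x\<in>UNIV. Ci i x * (mq i x - mo i x))
       = (\<Sum>i\<in>V. \<Sum>x\<in>UNIV. Ci i x * mq i x) - (\<Sum>i\<in>V. \<Sum>x\<in>UNIV. Ci i x * mo i x)"
      by (simp only: right_diff_distrib sum_subtractf)
    have c2: "(\<Sum>e\<in>E. \<Sum>x\<in>UNIV. \<Sum>y\<in>UNIV. Ce e x y * (eq e x y - eo e x y))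
       = (\<Sum>e\<in>E. \<Sum>x\<in>UNIV. \<Sum>y\<in>UNIV. Ce e x y * eq e x y) - (\<Sum>e\<in>E. \<Sum>x\<in>UNIV. \<Sum>y\<in>UNIV. Ce e x y * eo e x y)"
      by (simp only: right_diff_distrib sum_subtractf)
    have sv: "(\<Sum>i\<in>V. \<Sum>x\<in>UNIV. Ci i x * (mq i x - mo i x)) \<le> (\<Sum>i\<in>V. Cn * (2 * t))"
      using pv by (intro sum_mono) auto
    have se: "(\<Sum>e\<in>E. \<Sum>x\<in>UNIV. \<Sum>y\<in>UNIV. Ce e x y * (eq e x y - eo e x y)) \<le> (\<Sum>e\<in>E. Cn * (2 * t + sn e (fst e) + sn e (snd e)))"
      using pe' by (intro sum_mono) auto
    have sv': "(\<Sum>i\<in>V. Cn * (2 * t)) = n * (Cn * (2 * t))" by (simp add: n_def)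
    have se': "(\<Sum>e\<in>E. Cn * (2 * t + sn e (fst e) + sn e (snd e))) = m * (Cn * (2 * t)) + Cn * SUMN"
      unfolding SUMN_def by (simp add: m_def sum.distrib sum_distrib_left algebra_simps)
    have pert: "cost V E Ci Ce mq eq - cost V E Ci Ce mo eo \<le> n * (Cn * (2 * t)) + m * (Cn * (2 * t)) + Cn * SUMN"
      using sv se c1 c2 unfolding sv' se' cost_def by linarith
    have "n * (Cn * (2 * t)) + m * (Cn * (2 * t)) = 4 * d * \<delta> * (n + m) * Cn"
      by (simp add: t_def algebra_simps)
    thus ?thesis using lag pert by linarith
  qed
  have final: "cost V E Ci Ce mv pe - cost V E Ci Ce mo eo
      \<le> 16 * (m + n) * d * Cn * \<delta> + 4 * Cn * SUMN + (n * ln d + 2 * m * ln d) / \<eta>"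
  proof -
    have P: "d * \<delta> * (n + m) * Cn \<ge> 0" using dpos \<delta>0 Cn0 by (simp add: n_def m_def)
    have "4 * d * \<delta> * (n + m) * Cn = 4 * (d * \<delta> * (n + m) * Cn)" by simp
    moreover have "16 * (m + n) * d * Cn * \<delta> = 16 * (d * \<delta> * (n + m) * Cn)" by (simp add: algebra_simps)
    moreover have "(n + 2 * m) * ln d / \<eta> = (n * ln d + 2 * m * ln d) / \<eta>" by (simp add: algebra_simps)
    moreover have "Cn * SUMN \<ge> 0" using Cn0 SUMN0 by simp
    ultimately show ?thesis using stepR stepO P by linarith
  qed
  show ?thesis using final
    unfolding Let_def n_def m_def d_def Cn_def \<delta>_def SUMN_def sn_def mv_def pe_def mo_def eo_def proj_v_def .
qed


end
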